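(* Let $\mathbb{K}$ be a field, $q\in\mathbb{K}^*$ not a root of unity, $n\geq 3$, and $R=\mathcal{O}_q(M_n)$. Let $\sigma$ be a $\mathbb{K}$-algebra automorphism of $R$ such that there exist nonzero scalars $\lambda_{i,\alpha}\in\mathbb{K}^*$ ($1\le i,\alpha\le n$) with $\sigma(Y_{i,\alpha})-\lambda_{i,\alpha}Y_{i,\alpha}\in R_{\geq 2}$ for all $(i,\alpha)$. Then there exists a torus automorphism $\sigma_h$ of $R$ such that $\sigma_h\circ\sigma(Y_{i,\alpha})-Y_{i,\alpha}\in R_{\geq 2}$ for all $(i,\alpha)$.
   Context: $\mathcal{O}_q(M_n)$ is the $\mathbb{K}$-algebra generated by $Y_{i,\alpha}$, $1\le i,\alpha\le n$, subject to: $Y_{i,\beta}Y_{i,\alpha}=q^{-1}Y_{i,\alpha}Y_{i,\beta}$ for $\alpha<\beta$; $Y_{j,\alpha}Y_{i,\alpha}=q^{-1}Y_{i,\alpha}Y_{j,\alpha}$ for $i<j$; $Y_{j,\beta}Y_{i,\alpha}=Y_{i,\alpha}Y_{j,\beta}$ for $i<j$, $\alpha>\beta$; $Y_{j,\beta}Y_{i,\alpha}=Y_{i,\alpha}Y_{j,\beta}-(q-q^{-1})Y_{i,\beta}Y_{j,\alpha}$ for $i<j$, $\alpha<\beta$. It is $\mathbb{N}$-graded $R=\bigoplus_{i\in\mathbb{N}}R_i$ with each $Y_{i,\alpha}$ of degree 1, and $R_{\geq d}:=\bigoplus_{i\ge d}R_i$. For $h=(a_1,\dots,a_n,b_1,\dots,b_{n-1})\in(\mathbb{K}^*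 )^{2n-1}$, the torus automorphism $\sigma_h$ is defined by $\sigma_h(Y_{i,\alpha})=a_ib_\alpha Y_{i,\alpha}$ if $\alpha<n$ and $\sigma_h(Y_{i,n})=a_iY_{i,n}$; the torus automorphisms form a subgroup $\mathcal{H}$ of $\mathrm{Aut}(R)$. *)

theory Defs
  imports Main
begin

text \<open>Free associative K-algebra on generators Y(i,alpha) (pairs of naturals):
  an element is a function from words (lists of generators) to coefficients.\<close>

type_synonym 'k fa = "(nat \<times> nat) list \<Rightarrow> 'k"

definition fa_carrier :: "nat \<Rightarrow> ('k::field) fa set" where
  "fa_carrier n = {f. finite {w. f w \<noteq> 0} \<and>
     (\<forall>w. f w \<noteq> 0 \<longrightarrow> set w \<subseteq> {1..n} \<times> {1..n})}"

definition fa_add :: "('k::field) fa \<Rightarrow> 'k fa \<Rightarrow> 'k fa" where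
  "fa_add f g = (\<lambda>w. f w + g w)"

definition fa_sub :: "('k::field) fa \<Rightarrow> 'k fa \<Rightarrow> 'k fa" where
  "fa_sub f g = (\<lambda>w. f w - g w)"

definition fa_smult :: "'k::field \<Rightarrow> 'k fa \<Rightarrow> 'k fa" where
  "fa_smult c f = (\<lambda>w. c * f w)"

definition fa_mult :: "('k::field) fa \<Rightarrow> 'k fa \<Rightarrow> 'k fa" where
  "fa_mult f g = (\<lambda>w. \<Sum>i\<in>{0..length w}. f (take i w) * g (drop i w))"

definition fa_one :: "('k::field) fa" where
  "fa_one = (\<lambda>w. if w = [] then 1 else 0)"

definition mon :: "(nat \<times> nat) list \<Rightarrow> ('k::field) fa" where
  "mon u = (\<lambda>w. if w = u then 1 else 0)"

abbreviation gen :: "nat \<Rightarrow> nat \<Rightarrow> ('k::field) fa" where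
  "gen i a \<equiv> mon [(i, a)]"

text \<open>Unique algebra endomorphism of the free algebra sending Y(x) to phi x.\<close>
fun wordprod :: "(nat \<times> nat \<Rightarrow> ('k::field) fa) \<Rightarrow> (nat \<times> nat) list \<Rightarrow> 'k fa" where
  "wordprod phi [] = fa_one"
| "wordprod phi (x # w) = fa_mult (phi x) (wordprod phi w)"

definition fa_ext :: "(nat \<times> nat \<Rightarrow> ('k::field) fa) \<Rightarrow> 'k fa \<Rightarrow> 'k fa" where
  "fa_ext phi f = (\<lambda>u. \<Sum>w\<in>{w. f w \<noteq> 0}. f w * wordprod phi w u)"

text \<open>Defining relations of O_q(M_n) (each relation written as lhs - rhs).\<close>
definition qrels :: "'k::field \<Rightarrow> nat \<Rightarrow> 'k fa set" where
  "qrels q n =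
     {fa_sub (mon [(i,b),(i,a)]) (fa_smult (inverse q) (mon [(i,a),(i,b)])) | i a b.
        i \<in> {1..n} \<and> a \<in> {1..n} \<and> b \<in> {1..n} \<and> a < b}
   \<union> {fa_sub (mon [(j,a),(i,a)]) (fa_smult (inverse q) (mon [(i,a),(j,a)])) | i j a.
        i \<in> {1..n} \<and> j \<in> {1..n} \<and> a \<in> {1..n} \<and> i < j}
   \<union> {fa_sub (mon [(j,b),(i,a)]) (mon [(i,a),(j,b)]) | i j a b.
        i \<in> {1..n} \<and> j \<in> {1..n} \<and> a \<in> {1..n} \<and> b \<in> {1..n} \<and> i < j \<and> a > b}
   \<union> {fa_sub (mon [(j,b),(i,a)])
         (fa_sub (mon [(i,a),(j,b)]) (fa_smult (q - inverse q) (mon [(i,b),(j,a)]))) | i j a b.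
        i \<in> {1..n} \<and> j \<in> {1..n} \<and> a \<in> {1..n} \<and> b \<in> {1..n} \<and> i < j \<and> a < b}"

text \<open>The two-sided ideal of the free algebra generated by the relations;
  O_q(M_n) = fa_carrier n / qideal q n.\<close>
inductive_set qideal :: "'k::field \<Rightarrow> nat \<Rightarrow> 'k fa set" for q n where
  rel: "r \<in> qrels q n \<Longrightarrow> r \<in> qideal q n"
| zero: "(\<lambda>w. 0) \<in> qideal q n"
| add: "a \<in> qideal q n \<Longrightarrow> b \<in> qideal q n \<Longrightarrow> fa_add a b \<in> qideal q n"
| smult: "a \<in> qideal q n \<Longrightarrow> fa_smult c a \<in> qideal q n"
| multl: "a \<in> qideal q n \<Longrightarrow> f \<in> fa_carrier n \<Longrightarrow> fa_mult f a \<in> qideal q n"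
| multr: "a \<in> qideal q n \<Longrightarrow> f \<in> fa_carrier n \<Longrightarrow> fa_mult a f \<in> qideal q n"

text \<open>Membership of the class of f in R_{>=2}: f is congruent modulo the ideal to
  an element of the free algebra supported on words of length >= 2.\<close>
definition in_Rge2 :: "'k::field \<Rightarrow> nat \<Rightarrow> 'k fa \<Rightarrow> bool" where
  "in_Rge2 q n f \<longleftrightarrow> (\<exists>r \<in> fa_carrier n. (\<forall>w. r w \<noteq> 0 \<longrightarrow> 2 \<le> length w) \<and>
      fa_sub f r \<in> qideal q n)"

text \<open>phi (images of the generators, as representatives in the free algebra)
  defines a K-algebra automorphism of O_q(M_n): the induced endomorphism of the
  free algebra preserves the ideal, and the induced map on the quotient is
  injective and surjective.\<close>
definition is_qaut :: "'k::field \<Rightarrow> nat \<Rightarrow> (nat \<times> nat \<Rightarrow> 'k fa) \<Rightarrow> bool" where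
  "is_qaut q n phi \<longleftrightarrow>
     (\<forall>i\<in>{1..n}. \<forall>a\<in>{1..n}. phi (i,a) \<in> fa_carrier n) \<and>
     (\<forall>f \<in> qideal q n. fa_ext phi f \<in> qideal q n) \<and>
     (\<forall>f \<in> fa_carrier n. fa_ext phi f \<in> qideal q n \<longrightarrow> f \<in> qideal q n) \<and>
     (\<forall>g \<in> fa_carrier n. \<exists>f \<in> fa_carrier n. fa_sub (fa_ext phi f) g \<in> qideal q n)"

text \<open>Generator images of the torus automorphism sigma_h, h = (a_1..a_n, b_1..b_{n-1}).\<close>
definition torus :: "nat \<Rightarrow> (nat \<Rightarrow> 'k::field) \<Rightarrow> (nat \<Rightarrow> 'k) \<Rightarrow> nat \<times> nat \<Rightarrow> 'k fa" where
  "torus n a b = (\<lambda>(i, al). fa_smult (if al < n then a i * b al else a i) (gen i al))"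

end

theory Submission
  imports Defs
begin


lemma fa_mult_Nil: "fa_mult f g [] = f [] * g []"
  by (simp add: fa_mult_def)

lemma fa_mult_1: "fa_mult f g [x] = f [] * g [x] + f [x] * g []"
  by (simp add: fa_mult_def numeral_2_eq_2)

lemma fa_mult_2: "fa_mult f g [x,y] = f [] * g [x,y] + f [x] * g [y] + f [x,y] * g []"
  by (simp add: fa_mult_def numeral_2_eq_2 numeral_3_eq_3 add.assoc)

lemma ideal_low: "a \<in> qideal q n \<Longrightarrow> length w < 2 \<Longrightarrow> a w = 0"
proof (induction arbitrary: w rule: qideal.induct)
  case (rel r)
  then show ?case by (auto simp: qrels_def fa_sub_def fa_smult_def mon_def)
next
  case (multl a f)
  then show ?case
    by (cases w) (auto simp: fa_mult_Nil fa_mult_1 less_Suc_eq)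
next
  case (multr a f)
  then show ?case
    by (cases w) (auto simp: fa_mult_Nil fa_mult_1 less_Suc_eq)
qed (auto simp: fa_add_def fa_smult_def)

lemma ideal_L:
  assumes "a \<in> qideal q n" "i0 < j0" "al0 < be0" "1 + k * (q - inverse q) = 0"
  shows "a [(j0,be0),(i0,al0)] + k * (a [(i0,be0),(j0,al0)] + a [(j0,al0),(i0,be0)]) = 0"
  using assms(1)
proof (induction rule: qideal.induct)
  case (rel r)
  then show ?case using assms(2-4)
    by (auto simp: qrels_def fa_sub_def fa_smult_def mon_def)
next
  case (multl a f)
  have l: "\<And>w. length w < 2 \<Longrightarrow> a w = 0" using multl ideal_low by blast
  have "fa_mult f a [(j0,be0),(i0,al0)] + k * (fa_mult f a [(i0,be0),(j0,al0)] + fa_mult f a [(j0,al0),(i0,be0)])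
     = f [] * (a [(j0,be0),(i0,al0)] + k * (a [(i0,be0),(j0,al0)] + a [(j0,al0),(i0,be0)]))"
    by (simp add: fa_mult_2 l algebra_simps)
  then show ?case using multl by simp
next
  case (multr a f)
  have l: "\<And>w. length w < 2 \<Longrightarrow> a w = 0" using multr ideal_low by blast
  have "fa_mult a f [(j0,be0),(i0,al0)] + k * (fa_mult a f [(i0,be0),(j0,al0)] + fa_mult a f [(j0,al0),(i0,be0)])
     = f [] * (a [(j0,be0),(i0,al0)] + k * (a [(i0,be0),(j0,al0)] + a [(j0,al0),(i0,be0)]))"
    by (simp add: fa_mult_2 l algebra_simps)
  then show ?case using multr by simp
next
  case (smult a c)
  then show ?case by (simp add: fa_smult_def) (metis distrib_left mult.left_commute mult_zero_right)
qed (auto simp: fa_add_def algebra_simps)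


lemma sum_delta_gen: "finite S \<Longrightarrow> (\<forall>i\<in>S. i \<noteq> j \<longrightarrow> F i = 0) \<Longrightarrow> sum F S = (if j \<in> S then F j else 0)"
proof -
  assume "finite S" "\<forall>i\<in>S. i \<noteq> j \<longrightarrow> F i = 0"
  hence "sum F S = sum (\<lambda>i. if i = j then F j else 0) S" by (intro sum.cong) auto
  thus ?thesis using \<open>finite S\<close> by simp
qed

lemma mult_one: "fa_mult g fa_one = g"
proof
  fix u
  have "fa_mult g fa_one u = (\<Sum>i\<in>{0..length u}. g (take i u) * fa_one (drop i u))"
    by (simp add: fa_mult_def)
  also have "\<dots> = g (take (length u) u) * fa_one (drop (length u) u)"
    by (subst sum_delta_gen) (auto simp: fa_one_def)
  finally show "fa_mult g fa_one u = g u" by (simp add: fa_one_def)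
qed

lemma mult_mon1: "fa_mult (mon [x]) g u = (case u of [] \<Rightarrow> 0 | y # v \<Rightarrow> if y = x then g v else 0)"
proof -
  have "fa_mult (mon [x]) g u = (\<Sum>i\<in>{0..length u}. mon [x] (take i u) * g (drop i u))"
    by (simp add: fa_mult_def)
  also have "\<dots> = (if 1 \<in> {0..length u} then mon [x] (take 1 u) * g (drop 1 u) else 0)"
  proof (rule sum_delta_gen)
    show "\<forall>i\<in>{0..length u}. i \<noteq> 1 \<longrightarrow> mon [x] (take i u) * g (drop i u) = 0"
    proof (intro ballI impI)
      fix i assume "i \<in> {0..length u}" "i \<noteq> 1"
      hence "take i u \<noteq> [x]" by (metis length_take min.absorb2 atLeastAtMost_iff length_Cons list.size(3) One_nat_def)
      thus "mon [x] (take i u) * g (drop i u) = 0" unfolding mon_def by simp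
    qed
  qed simp
  finally show ?thesis by (cases u) (auto simp: mon_def)
qed

definition wt :: "(nat \<times> nat \<Rightarrow> 'k::field) \<Rightarrow> (nat \<times> nat) list \<Rightarrow> 'k" where
  "wt c w = prod_list (map c w)"

lemma wordprod_diag:
  "wordprod (\<lambda>x. fa_smult (c x) (mon [x])) w = fa_smult (wt c w) (mon w)"
proof (induction w)
  case Nil
  show ?case by (auto simp: fa_one_def fa_smult_def mon_def wt_def)
next
  case (Cons x w)
  show ?case
  proof
    fix u
    have "fa_mult (fa_smult (c x) (mon [x])) g u = c x * fa_mult (mon [x]) g u" for g
      by (simp add: fa_mult_def fa_smult_def sum_distrib_left mult.assoc)
    hence "wordprod (\<lambda>x. fa_smult (c x) (mon [x])) (x # w) u = c x * fa_mult (mon [x]) (fa_smult (wt c w) (mon w)) u"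
      using Cons by simp
    thus "wordprod (\<lambda>x. fa_smult (c x) (mon [x])) (x # w) u = fa_smult (wt c (x # w)) (mon (x # w)) u"
      unfolding mult_mon1 by (cases u) (auto simp: fa_smult_def mon_def wt_def)
  qed
qed

lemma ext_diag:
  assumes "f \<in> fa_carrier n"
  shows "fa_ext (\<lambda>x. fa_smult (c x) (mon [x])) f = (\<lambda>w. f w * wt c w)"
proof
  fix u
  have fin: "finite {w. f w \<noteq> 0}" using assms by (simp add: fa_carrier_def)
  have "fa_ext (\<lambda>x. fa_smult (c x) (mon [x])) f u = (\<Sum>w\<in>{w. f w \<noteq> 0}. f w * (wt c w * mon w u))"
    unfolding fa_ext_def wordprod_diag by (simp add: fa_smult_def)
  also have "\<dots> = (if u \<in> {w. f w \<noteq> 0} then f u * (wt c u * mon u u) else 0)"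
    by (rule sum_delta_gen[OF fin]) (auto simp: mon_def)
  finally show "fa_ext (\<lambda>x. fa_smult (c x) (mon [x])) f u = f u * wt c u"
    by (auto simp: mon_def)
qed

lemma wt_append: "wt c (u @ v) = wt c u * wt c v"
  by (simp add: wt_def)

lemma W_rel:
  assumes "\<forall>w. r w \<noteq> 0 \<longrightarrow> wt c w = K" "r \<in> qideal q n"
  shows "(\<lambda>w. r w * wt c w) \<in> qideal q n"
proof -
  have "(\<lambda>w. r w * wt c w) = fa_smult K r"
  proof
    fix w show "r w * wt c w = fa_smult K r w"
      using assms(1) by (cases "r w = 0") (auto simp: fa_smult_def mult.commute)
  qed
  thus ?thesis using assms(2) qideal.smult by metis
qed

lemma W_ideal:
  assumes "a \<in> qideal q n" "\<And>i al. c (i, al) = A i * B al"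
  shows "(\<lambda>w. a w * wt c w) \<in> qideal q n"
  using assms(1)
proof (induction rule: qideal.induct)
  case (rel r)
  have rI: "r \<in> qideal q n" by (rule qideal.rel[OF rel])
  from rel show ?case
  proof (unfold qrels_def, elim UnE CollectE exE conjE)
    fix i a b assume r: "r = fa_sub (mon [(i, b), (i, a)]) (fa_smult (inverse q) (mon [(i, a), (i, b)]))"
    show ?thesis
      by (rule W_rel[OF _ rI, where K = "A i * B b * (A i * B a)"]) (use r in \<open>auto simp: r fa_sub_def fa_smult_def mon_def wt_def assms(2) split: if_splits\<close>)
  next
    fix i j a assume r: "r = fa_sub (mon [(j, a), (i, a)]) (fa_smult (inverse q) (mon [(i, a), (j, a)]))"
    show ?thesis
      by (rule W_rel[OF _ rI, where K = "A j * B a * (A i * B a)"]) (use r in \<open>auto simp: r fa_sub_def fa_smult_def mon_def wt_def assms(2) split: if_splits\<close>)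
  next
    fix i j a b assume r: "r = fa_sub (mon [(j, b), (i, a)]) (mon [(i, a), (j, b)])"
    show ?thesis
      by (rule W_rel[OF _ rI, where K = "A j * B b * (A i * B a)"]) (use r in \<open>auto simp: r fa_sub_def fa_smult_def mon_def wt_def assms(2) split: if_splits\<close>)
  next
    fix i j a b assume r: "r = fa_sub (mon [(j, b), (i, a)])
         (fa_sub (mon [(i, a), (j, b)]) (fa_smult (q - inverse q) (mon [(i, b), (j, a)])))"
    show ?thesis
      by (rule W_rel[OF _ rI, where K = "A j * B b * (A i * B a)"]) (use r in \<open>auto simp: r fa_sub_def fa_smult_def mon_def wt_def assms(2) split: if_splits\<close>)
  qed
next
  case zero
  then show ?case by (simp add: qideal.zero)
next
  case (add a b)
  have "(\<lambda>w. fa_add a b w * wt c w) = fa_add (\<lambda>w. a w * wt c w) (\<lambda>w. b w * wt c w)"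
    by (auto simp: fa_add_def algebra_simps)
  then show ?case using add qideal.add by metis
next
  case (smult a d)
  have "(\<lambda>w. fa_smult d a w * wt c w) = fa_smult d (\<lambda>w. a w * wt c w)"
    by (auto simp: fa_smult_def algebra_simps)
  then show ?case using smult qideal.smult by metis
next
  case (multl a f)
  have "(\<lambda>w. fa_mult f a w * wt c w) = fa_mult (\<lambda>w. f w * wt c w) (\<lambda>w. a w * wt c w)"
  proof
    fix w
    have "wt c w = wt c (take i w) * wt c (drop i w)" for i
      by (metis append_take_drop_id wt_append)
    thus "fa_mult f a w * wt c w = fa_mult (\<lambda>w. f w * wt c w) (\<lambda>w. a w * wt c w) w"
      by (simp add: fa_mult_def sum_distrib_right) (metis (no_types, lifting) mult.assoc mult.left_commute)
  qed
  moreover have "(\<lambda>w. f w * wt c w) \<in> fa_carrier n" using multl by (auto simp: fa_carrier_def)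
  ultimately show ?case using multl qideal.multl by metis
next
  case (multr a f)
  have "(\<lambda>w. fa_mult a f w * wt c w) = fa_mult (\<lambda>w. a w * wt c w) (\<lambda>w. f w * wt c w)"
  proof
    fix w
    have "wt c w = wt c (take i w) * wt c (drop i w)" for i
      by (metis append_take_drop_id wt_append)
    thus "fa_mult a f w * wt c w = fa_mult (\<lambda>w. a w * wt c w) (\<lambda>w. f w * wt c w) w"
      by (simp add: fa_mult_def sum_distrib_right) (metis (no_types, lifting) mult.assoc mult.left_commute)
  qed
  moreover have "(\<lambda>w. f w * wt c w) \<in> fa_carrier n" using multr by (auto simp: fa_carrier_def)
  ultimately show ?case using multr qideal.multr by metis
qed


lemma ext_fin:
  assumes "finite S" "{w. f w \<noteq> 0} \<subseteq> S"
  shows "fa_ext phi f u = (\<Sum>w\<in>S. f w * wordprod phi w u)"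
  unfolding fa_ext_def
  by (rule sum.mono_neutral_left) (use assms in auto)

lemma phi_low:
  assumes "in_Rge2 q n (fa_sub (phi x) (fa_smult l (mon [x])))" "length w < 2"
  shows "phi x w = l * mon [x] w"
proof -
  obtain r where r: "r \<in> fa_carrier n" "\<forall>w. r w \<noteq> 0 \<longrightarrow> 2 \<le> length w"
    "fa_sub (fa_sub (phi x) (fa_smult l (mon [x]))) r \<in> qideal q n"
    using assms(1) unfolding in_Rge2_def by blast
  have "fa_sub (fa_sub (phi x) (fa_smult l (mon [x]))) r w = 0"
    by (rule ideal_low[OF r(3) assms(2)])
  moreover have "r w = 0" using r(2) assms(2) by force
  ultimately show ?thesis by (simp add: fa_sub_def fa_smult_def)
qed

theorem lemma1p4:
  fixes q :: "'k::field" and n :: nat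
    and phi :: "nat \<times> nat \<Rightarrow> 'k fa" and lam :: "nat \<times> nat \<Rightarrow> 'k"
  assumes "q \<noteq> 0" and "\<forall>m::nat. m > 0 \<longrightarrow> q ^ m \<noteq> 1" and "n \<ge> 3"
    and "is_qaut q n phi"
    and "\<forall>i\<in>{1..n}. \<forall>al\<in>{1..n}. lam (i, al) \<noteq> 0 \<and>
           in_Rge2 q n (fa_sub (phi (i, al)) (fa_smult (lam (i, al)) (gen i al)))"
  shows "\<exists>a b. (\<forall>i\<in>{1..n}. a i \<noteq> 0) \<and> (\<forall>al\<in>{1..n-1}. b al \<noteq> 0) \<and>
           (\<forall>i\<in>{1..n}. \<forall>al\<in>{1..n}.
              in_Rge2 q n (fa_sub (fa_ext (torus n a b) (phi (i, al))) (gen i al)))"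
proof -
  have qq: "q - inverse q \<noteq> 0"
  proof
    assume "q - inverse q = 0"
    hence "q * q = 1" using assms(1) by (simp add: field_simps)
    thus False using assms(2)[rule_format, of 2] by (simp add: power2_eq_square)
  qed
  define k where "k = - inverse (q - inverse q)"
  have k: "1 + k * (q - inverse q) = 0" using qq by (simp add: k_def)
  have low: "phi x w = lam x * mon [x] w" if "x \<in> {1..n} \<times> {1..n}" "length w < 2" for x w
    using phi_low[OF _ that(2), of q n phi x "lam x"] assms(5) that(1) by auto
  have prod2: "fa_mult (phi x) (phi y) [s,t] = (if s = x \<and> t = y then lam x * lam y else 0)"
    if "x \<in> {1..n} \<times> {1..n}" "y \<in> {1..n} \<times> {1..n}" for x y s t
    using low[OF that(1)] low[OF that(2)] by (simp add: fa_mult_2 mon_def)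
  have key: "lam (j0,be0) * lam (i0,al0) = lam (i0,be0) * lam (j0,al0)"
    if "i0 \<in> {1..n}" "j0 \<in> {1..n}" "al0 \<in> {1..n}" "be0 \<in> {1..n}" "i0 < j0" "al0 < be0"
    for i0 j0 al0 be0
  proof -
    define r4 where "r4 = fa_sub (mon [(j0,be0),(i0,al0)])
         (fa_sub (mon [(i0,al0),(j0,be0)]) (fa_smult (q - inverse q) (mon [(i0,be0),(j0,al0)])))"
    have "r4 \<in> qrels q n" unfolding qrels_def r4_def
      apply (rule UnI2) using that by blast
    hence "r4 \<in> qideal q n" by (rule qideal.rel)
    hence EI: "fa_ext phi r4 \<in> qideal q n" using assms(4) unfolding is_qaut_def by blast
    define S where "S = {[(j0,be0),(i0,al0)], [(i0,al0),(j0,be0)], [(i0,be0),(j0,al0)]}"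
    have E: "fa_ext phi r4 u = (\<Sum>w\<in>S. r4 w * wordprod phi w u)" for u
    proof (rule ext_fin)
      show "finite S" by (simp add: S_def)
      have "r4 w = 0" if "w \<notin> S" for w
        using that unfolding S_def r4_def fa_sub_def fa_smult_def mon_def by simp
      thus "{w. r4 w \<noteq> 0} \<subseteq> S" by blast
    qed
    have Esum: "fa_ext phi r4 u = wordprod phi [(j0,be0),(i0,al0)] u - wordprod phi [(i0,al0),(j0,be0)] u
        + (q - inverse q) * wordprod phi [(i0,be0),(j0,al0)] u" for u
      unfolding E S_def using that by (simp add: r4_def fa_sub_def fa_smult_def mon_def)
    have wp: "wordprod phi [x,y] = fa_mult (phi x) (phi y)" for x y
      by (simp add: mult_one)
    have "fa_ext phi r4 [(j0,be0),(i0,al0)] + k * (fa_ext phi r4 [(i0,be0),(j0,al0)] + fa_ext phi r4 [(j0,al0),(i0,be0)]) = 0"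
      by (rule ideal_L[OF EI that(5,6) k])
    hence "lam (j0,be0) * lam (i0,al0) + k * ((q - inverse q) * (lam (i0,be0) * lam (j0,al0))) = 0"
      unfolding Esum wp using that by (simp add: prod2)
    hence "lam (j0,be0) * lam (i0,al0) - (lam (i0,be0) * lam (j0,al0)) = 0"
      using qq by (simp add: k_def)
    thus ?thesis by simp
  qed
  have key2: "lam (i,al) * lam (1,n) = lam (i,n) * lam (1,al)" if "i \<in> {1..n}" "al \<in> {1..n}" for i al
  proof (cases "i = 1 \<or> al = n")
    case True then show ?thesis by auto
  next
    case False
    then show ?thesis using key[of 1 i al n] that by (auto simp: mult.commute)
  qed
  define a where "a i = inverse (lam (i, n))" for i
  define b where "b al = lam (1, n) * inverse (lam (1, al))" for al
  define c where "c = (\<lambda>(i, al). if al < n then a i * b al else a i)"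
  have T: "torus n a b = (\<lambda>x. fa_smult (c x) (mon [x]))"
    by (auto simp: torus_def c_def fun_eq_iff)
  have nn: "n \<in> {1..n}" "1 \<in> {1..n}" using assms(3) by auto
  show ?thesis
  proof (intro exI conjI ballI)
    fix i assume "i \<in> {1..n}" thus "a i \<noteq> 0" using assms(5) nn by (simp add: a_def)
  next
    fix al assume "al \<in> {1..n-1}"
    hence "al \<in> {1..n}" by auto
    thus "b al \<noteq> 0" using assms(5) nn by (simp add: b_def)
  next
    fix i al assume ia: "i \<in> {1..n}" "al \<in> {1..n}"
    let ?x = "(i, al)"
    have cl: "c ?x * lam ?x = 1"
      using key2[OF ia] assms(5) ia nn by (auto simp: c_def a_def b_def field_simps)
    have pc: "phi ?x \<in> fa_carrier n" using assms(4) ia unfolding is_qaut_def by blast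
    obtain r where r: "r \<in> fa_carrier n" "\<forall>w. r w \<noteq> 0 \<longrightarrow> 2 \<le> length w"
      "fa_sub (fa_sub (phi ?x) (fa_smult (lam ?x) (mon [?x]))) r \<in> qideal q n"
      using assms(5) ia unfolding in_Rge2_def by blast
    have cfac: "c (i', al') = a i' * (if al' < n then b al' else 1)" for i' al'
      by (simp add: c_def)
    have WI: "(\<lambda>w. fa_sub (fa_sub (phi ?x) (fa_smult (lam ?x) (mon [?x]))) r w * wt c w) \<in> qideal q n"
      by (rule W_ideal[OF r(3), where A = a and B = "\<lambda>al'. if al' < n then b al' else 1"]) (rule cfac)
    have eq: "fa_sub (fa_sub (fa_ext (torus n a b) (phi ?x)) (gen i al)) (\<lambda>w. r w * wt c w)
        = (\<lambda>w. fa_sub (fa_sub (phi ?x) (fa_smult (lam ?x) (mon [?x]))) r w * wt c w)"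
    proof
      fix w
      have "mon [?x] w = lam ?x * mon [?x] w * wt c w"
        using cl by (auto simp: mon_def wt_def mult.commute)
      thus "fa_sub (fa_sub (fa_ext (torus n a b) (phi ?x)) (gen i al)) (\<lambda>w. r w * wt c w) w
        = fa_sub (fa_sub (phi ?x) (fa_smult (lam ?x) (mon [?x]))) r w * wt c w"
        unfolding T ext_diag[OF pc] by (simp add: fa_sub_def fa_smult_def algebra_simps)
    qed
    have rc: "(\<lambda>w. r w * wt c w) \<in> fa_carrier n" using r(1) by (auto simp: fa_carrier_def)
    show "in_Rge2 q n (fa_sub (fa_ext (torus n a b) (phi ?x)) (gen i al))"
      unfolding in_Rge2_def using rc r(2) WI eq by (intro bexI[of _ "\<lambda>w. r w * wt c w"]) auto
  qed
qed

end
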